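(* In the setting described in the context, there is a constant $M_2>0$, independent of $\epsilon\in(0,1)$, such that for all $x\in\mathbb{R}$ and all $t\geq0$, $$|v^\epsilon(x,t)|\leq \frac{M_2}{\epsilon^\alpha},\qquad \Big|\frac{\partial}{\partial x}v^\epsilon(x,t)\Big|\leq \frac{M_2}{\epsilon^{2\alpha}}.$$
   Context: Let $\mathcal{C}_b(\mathbb{R})$ denote the Banach space of bounded continuous real functions on $\mathbb{R}$ with the sup norm. For a real function $u$ set $u^+=\max(0,u)$, $u^-=\max(0,-u)$. For $0<\epsilon<1$ let $u^\epsilon:\mathbb{R}\times[0,\infty)\to\mathbb{R}$ be $2\pi$-periodic in $x$, with $t\mapsto u^\epsilon(\cdot,t)$ continuous from $[0,\infty)$ into $\mathcal{C}_b(\mathbb{R})$, and assume there is $M_1>0$ with $|u^\epsilon(x,t)|\leq M_1$ for all $\epsilon,x,t\ge0$. Let $v_0^\epsilon\in\mathcal{C}_b(\mathbb{R})$ be $2\pi$-periodic with $\sup_{\epsilon}\int_{-\pi}^{\pi}|v_0^\epsilon|dx<\infty$. Let $X^\epsilon$ be the unique global $\mathcal{C}^1$ solution $[0,\infty)\to\mathcal{C}_b(\mathbb{R})$ of $$\frac{d}{dt}X^\epsilon(x,t)=\frac{1}{\epsilon}\big[X^\epsilon(x-\epsilon,t)u^{\epsilon+}(x-\epsilon,t)-X^\epsilon(x,t)|u^{\epsilon}(x,t)|+X^\epsilon(x+\epsilon,t)u^{\epsilon-}(x+\epsilon,t)\big],\quad X^\epsilon(x,0)=v_0^\epsilon(x).$$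 Let $\phi\in\mathcal{C}^\infty(\mathbb{R})$ have compact support with $\int\phi=1$, let $\alpha\in]0,1]$, $\phi_{\epsilon^\alpha}(x)=\epsilon^{-\alpha}\phi(x/\epsilon^\alpha)$, and define $v^\epsilon(x,t)=(X^\epsilon(\cdot,t)*\phi_{\epsilon^\alpha})(x)$. *)

theory Defs
  imports "HOL-Analysis.Analysis"
begin

definition smooth_real :: "(real \<Rightarrow> real) \<Rightarrow> bool" where
  "smooth_real f \<longleftrightarrow> (\<forall>k::nat. \<forall>x. ((deriv ^^ k) f) differentiable (at x))"

definition has_compact_support :: "(real \<Rightarrow> real) \<Rightarrow> bool" where
  "has_compact_support f \<longleftrightarrow> compact (closure {x. f x \<noteq> 0})"

definition mollifier :: "(real \<Rightarrow> real) \<Rightarrow> real \<Rightarrow> real \<Rightarrow> real" where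
  "mollifier \<phi> \<delta> x = \<phi> (x / \<delta>) / \<delta>"

definition conv :: "(real \<Rightarrow> real) \<Rightarrow> (real \<Rightarrow> real) \<Rightarrow> real \<Rightarrow> real" where
  "conv f g x = integral UNIV (\<lambda>y. f y * g (x - y))"

definition upwind_rhs :: "real \<Rightarrow> (real \<Rightarrow> real) \<Rightarrow> (real \<Rightarrow> real) \<Rightarrow> real \<Rightarrow> real" where
  "upwind_rhs \<epsilon> X u x =
     (1 / \<epsilon>) * (X (x - \<epsilon>) * max 0 (u (x - \<epsilon>)) - X x * \<bar>u x\<bar>
                 + X (x + \<epsilon>) * max 0 (- u (x + \<epsilon>)))"

end

theory Submission
  imports Defs
begin



lemma per_int:
  fixes F :: "real \<Rightarrow> real"
  assumes per: "\<And>x. F (x + 2*pi) = F x"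
  shows "F (x + 2*pi*real_of_int k) = F x"
proof -
  have nat: "F (y + 2*pi*real n) = F y" for y n
    by (induction n) (auto simp: algebra_simps per[of "y + 2*pi*real _", simplified algebra_simps])
  show ?thesis
  proof (cases "k \<ge> 0")
    case True then show ?thesis using nat[of x "nat k"] by simp
  next
    case False
    then have "F (x + 2*pi*real_of_int k + 2*pi*real (nat (-k))) = F (x + 2*pi*real_of_int k)"
      using nat by blast
    then show ?thesis using False by simp
  qed
qed

lemma per_window:
  fixes F :: "real \<Rightarrow> real"
  assumes per: "\<And>x. F (x + 2*pi) = F x" and cont: "continuous_on UNIV F"
  shows "integral {a..a+2*pi} F = integral {-pi..pi} F"
proof -
  define k where "k = floor ((a+pi)/(2*pi))"
  define r where "r = a + pi - 2*pi*k"
  have k1: "real_of_int k \<le> (a+pi)/(2*pi)" "(a+pi)/(2*pi) < real_of_int k + 1"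
    unfolding k_def by linarith+
  have r0: "0 \<le> r" "r < 2*pi" using k1 unfolding r_def by (auto simp: field_simps)
  have int: "F integrable_on {c..d}" for c d
    by (rule integrable_continuous_interval) (rule continuous_on_subset[OF cont], simp)
  have "integral {a..a+2*pi} F = integral {-pi+r..pi+r} F"
  proof -
    have fx: "(\<lambda>x. F (x + (-2*pi*k))) = F"
    proof
      fix x show "F (x + (-2*pi*k)) = F x" using per_int[of F, OF per, of x "-k"] by simp
    qed
    have 1: "integral {(-pi+r) - (-2*pi*k)..(pi+r) - (-2*pi*k)} F = integral {-pi+r..pi+r} F"
      using integral_shift_real_ivl[of "-pi+r" "-2*pi*k" "pi+r" F] unfolding fx .
    have bnd: "(-pi+r) - (-2*pi*k) = a" "(pi+r) - (-2*pi*k) = a + 2*pi"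
      unfolding r_def by auto
    show ?thesis using 1 unfolding bnd .
  qed
  also have "\<dots> = integral {-pi+r..pi} F + integral {pi..pi+r} F"
    using r0 by (intro Henstock_Kurzweil_Integration.integral_combine[symmetric] int) auto
  also have "integral {pi..pi+r} F = integral {-pi..-pi+r} F"
  proof -
    have "integral {pi - 2*pi..(pi+r) - 2*pi} (\<lambda>x. F (x + 2*pi)) = integral {pi..pi+r} F"
      by (rule integral_shift_real_ivl)
    then show ?thesis using per by simp
  qed
  also have "integral {-pi+r..pi} F + integral {-pi..-pi+r} F = integral {-pi..pi} F"
    using r0 Henstock_Kurzweil_Integration.integral_combine[of "-pi" "-pi+r" pi F] int by auto
  finally show ?thesis .
qed

lemma per_shift:
  fixes F :: "real \<Rightarrow> real"
  assumes per: "\<And>x. F (x + 2*pi) = F x" and cont: "continuous_on UNIV F"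
  shows "integral {-pi..pi} (\<lambda>x. F (x + c)) = integral {-pi..pi} F"
proof -
  have "integral {(-pi+c) - c..(pi+c) - c} (\<lambda>x. F (x + c)) = integral {-pi+c..pi+c} F"
    by (rule integral_shift_real_ivl)
  also have "\<dots> = integral {-pi..pi} F" using per_window[OF per cont, of "-pi+c"] by simp
  finally show ?thesis by simp
qed

lemma per_multi:
  fixes F :: "real \<Rightarrow> real"
  assumes per: "\<And>x. F (x + 2*pi) = F x" and cont: "continuous_on UNIV F"
  shows "integral {c..c+2*pi*real N} F = real N * integral {-pi..pi} F"
proof (induction N)
  case 0 then show ?case by simp
next
  case (Suc N)
  have int: "F integrable_on {c..d}" for c d
    by (rule integrable_continuous_interval) (rule continuous_on_subset[OF cont], simp)
  have e: "c+2*pi*real (Suc N) = c+2*pi*real N + 2*pi" by (simp add: algebra_simps)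
  have "integral {c..c+2*pi*real N} F + integral {c+2*pi*real N..c+2*pi*real N + 2*pi} F
      = integral {c..c+2*pi*real N + 2*pi} F"
    by (rule Henstock_Kurzweil_Integration.integral_combine) (simp_all add: int)
  moreover have "integral {c+2*pi*real N..c+2*pi*real N + 2*pi} F = integral {-pi..pi} F"
    by (rule per_window[OF per cont])
  ultimately show ?case unfolding e using Suc.IH by (simp add: distrib_right)
qed

lemma dini_mono:
  fixes g :: "real \<Rightarrow> real"
  assumes cont: "continuous_on {0..} g"
    and step: "\<And>t e. 0 \<le> t \<Longrightarrow> 0 < e \<Longrightarrow> \<exists>d>0. \<forall>h. 0 < h \<and> h < d \<longrightarrow> g (t+h) \<le> g t + e*h"
    and ab: "0 \<le> a" "a \<le> b"
  shows "g b \<le> g a"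
proof -
  have key: "g b \<le> g a + 2*e*(b-a)" if e: "e > 0" for e
  proof -
    define S where "S = {s \<in> {a..b}. g s - 2*e*(s-a) \<le> g a}"
    have cS: "closed S" unfolding S_def
      by (intro continuous_on_closed_Collect_le continuous_intros continuous_on_subset[OF cont])
         (use ab in auto)
    have aS: "a \<in> S" using ab unfolding S_def by auto
    have bdd: "bdd_above S" unfolding S_def by (auto intro: bdd_aboveI[of _ b])
    define s where "s = Sup S"
    have sS: "s \<in> S" unfolding s_def using closed_contains_Sup[OF _ bdd cS] aS by blast
    have sb: "s = b"
    proof (rule ccontr)
      assume "s \<noteq> b"
      with sS have sb: "s < b" "a \<le> s" unfolding S_def by auto
      obtain d where d: "d > 0" "\<forall>h. 0 < h \<and> h < d \<longrightarrow> g (s+h) \<le> g s + e*h"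
        using step[of s e] sb ab e by auto
      define h where "h = min (d/2) (b - s)"
      have h: "0 < h" "h < d" "s + h \<le> b" using d sb unfolding h_def by auto
      have "g (s+h) \<le> g s + e*h" using d h by auto
      also have "\<dots> \<le> g a + 2*e*(s-a) + e*h" using sS unfolding S_def by auto
      also have "\<dots> \<le> g a + 2*e*(s+h-a)" using e h by (simp add: algebra_simps)
      finally have "s + h \<in> S" unfolding S_def using h sb by auto
      then have "s + h \<le> s" unfolding s_def using cSup_upper[OF _ bdd] by blast
      then show False using h by simp
    qed
    show ?thesis using sS sb unfolding S_def by auto
  qed
  show ?thesis
  proof (rule field_le_epsilon)
    fix e :: real assume e: "0 < e"
    define e' where "e' = e / (2*(b-a+1))"
    have e': "e' > 0" using e ab unfolding e'_def by auto
    have "2*e'*(b-a) \<le> e" unfolding e'_def using e ab by (simp add: field_simps)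
    then show "g b \<le> g a + e" using key[OF e'] by linarith
  qed
qed




lemma cont_norm_bound:
  fixes X :: "real \<Rightarrow> 'a::real_normed_vector" and g :: "real \<Rightarrow> real"
  assumes cX: "continuous_on S X" and K: "K \<ge> 0"
    and b: "\<And>s t. s \<in> S \<Longrightarrow> t \<in> S \<Longrightarrow> \<bar>g s - g t\<bar> \<le> K * norm (X s - X t)"
  shows "continuous_on S g"
  unfolding continuous_on_iff
proof (intro ballI allI impI)
  fix x e assume x: "x \<in> S" and e: "(0::real) < e"
  obtain d where d: "d > 0" "\<forall>x'\<in>S. dist x' x < d \<longrightarrow> dist (X x') (X x) < e/(K+1)"
    using cX x e K unfolding continuous_on_iff by (metis add_nonneg_pos divide_pos_pos zero_less_one)
  show "\<exists>d>0. \<forall>x'\<in>S. dist x' x < d \<longrightarrow> dist (g x') (g x) < e"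
  proof (intro exI[of _ d] conjI ballI impI)
    fix x' assume x': "x' \<in> S" "dist x' x < d"
    have "dist (g x') (g x) \<le> K * norm (X x' - X x)" using b[OF x'(1) x] by (simp add: dist_real_def)
    also have "\<dots> \<le> K * (e/(K+1))" using d x' K by (intro mult_left_mono) (auto simp: dist_norm)
    also have "\<dots> < e" using K e by (simp add: field_simps)
    finally show "dist (g x') (g x) < e" .
  qed (use d in auto)
qed

lemma continuous_on_apply_bcontfun_comp[continuous_intros]:
  "continuous_on S g \<Longrightarrow> continuous_on S (\<lambda>x. apply_bcontfun f (g x))"
  by (rule continuous_on_compose2[OF continuous_on_apply_bcontfun[of UNIV]]) auto

lemma bcf_diff_le: "\<bar>apply_bcontfun f x - apply_bcontfun g x\<bar> \<le> norm (f - g)"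
  using norm_bounded[of "f - g" x] by simp

lemma pos_step:
  fixes Z U :: "real \<Rightarrow> real"
  assumes eps: "\<epsilon> > 0" and U: "\<And>y. \<bar>U y\<bar> \<le> M1" and h: "0 \<le> h" "h * M1 \<le> \<epsilon>"
  shows "\<bar>Z x + h * upwind_rhs \<epsilon> Z U x\<bar> \<le>
     (h/\<epsilon>) * (\<bar>Z (x-\<epsilon>)\<bar> * max 0 (U (x-\<epsilon>))) + (1 - h*\<bar>U x\<bar>/\<epsilon>) * \<bar>Z x\<bar>
     + (h/\<epsilon>) * (\<bar>Z (x+\<epsilon>)\<bar> * max 0 (- U (x+\<epsilon>)))"
proof -
  have c1: "1 - h*\<bar>U x\<bar>/\<epsilon> \<ge> 0"
  proof -
    have "h*\<bar>U x\<bar> \<le> h * M1" using U h by (simp add: mult_left_mono)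
    then show ?thesis using eps h by (simp add: field_simps)
  qed
  have eq: "Z x + h * upwind_rhs \<epsilon> Z U x =
     (h/\<epsilon>) * (Z (x-\<epsilon>) * max 0 (U (x-\<epsilon>))) + (1 - h*\<bar>U x\<bar>/\<epsilon>) * Z x
     + (h/\<epsilon>) * (Z (x+\<epsilon>) * max 0 (- U (x+\<epsilon>)))"
    unfolding upwind_rhs_def using eps by (simp add: field_simps)
  have hh: "h/\<epsilon> \<ge> 0" using eps h by simp
  show ?thesis unfolding eq
    by (rule order_trans[OF abs_triangle_ineq] add_mono)+
       (use c1 hh eps h in \<open>auto simp: abs_mult\<close>)
qed

lemma pos_step_sup:
  fixes Z U :: "real \<Rightarrow> real"
  assumes eps: "\<epsilon> > 0" and U: "\<And>y. \<bar>U y\<bar> \<le> M1" and h: "0 \<le> h" "h * M1 \<le> \<epsilon>"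
    and B: "\<And>y. \<bar>Z y\<bar> \<le> B"
  shows "\<bar>Z x + h * upwind_rhs \<epsilon> Z U x\<bar> \<le> (1 + h * (2*M1/\<epsilon>)) * B"
proof -
  have B0: "B \<ge> 0" using B[of 0] by simp
  have M0: "M1 \<ge> 0" using U[of 0] by simp
  have hh: "h/\<epsilon> \<ge> 0" using eps h by simp
  have c1: "1 - h*\<bar>U x\<bar>/\<epsilon> \<ge> 0"
  proof -
    have "h*\<bar>U x\<bar> \<le> h * M1" using U h by (simp add: mult_left_mono)
    then show ?thesis using eps h by (simp add: field_simps)
  qed
  have p1: "\<bar>Z (x-\<epsilon>)\<bar> * max 0 (U (x-\<epsilon>)) \<le> B * M1"
    using B U B0 M0 by (intro mult_mono) (auto simp: abs_le_iff max_def)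
  have p2: "\<bar>Z (x+\<epsilon>)\<bar> * max 0 (- U (x+\<epsilon>)) \<le> B * M1"
    using B U B0 M0 by (intro mult_mono) (auto simp: abs_le_iff max_def)
  have "(h/\<epsilon>) * (\<bar>Z (x-\<epsilon>)\<bar> * max 0 (U (x-\<epsilon>))) + (1 - h*\<bar>U x\<bar>/\<epsilon>) * \<bar>Z x\<bar>
     + (h/\<epsilon>) * (\<bar>Z (x+\<epsilon>)\<bar> * max 0 (- U (x+\<epsilon>))) \<le> (h/\<epsilon>) * (B*M1) + 1 * B + (h/\<epsilon>) * (B*M1)"
  proof -
    have m: "(1 - h*\<bar>U x\<bar>/\<epsilon>) * \<bar>Z x\<bar> \<le> 1 * B"
      using c1 B[of x] B0 hh eps h by (intro mult_mono) (auto simp: field_simps)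
    show ?thesis
      using p1 p2 hh m by (intro add_mono mult_left_mono) auto
  qed
  also have "\<dots> = (1 + h * (2*M1/\<epsilon>)) * B" by (simp add: field_simps)
  finally show ?thesis using pos_step[where U=U and Z=Z and x=x, OF eps U h] by linarith
qed

locale traj =
  fixes \<epsilon> M1 :: real and Xe ue :: "real \<Rightarrow> (real \<Rightarrow>\<^sub>C real)"
  assumes eps: "\<epsilon> > 0" and M1: "M1 > 0"
    and ubd: "\<And>t x. 0 \<le> t \<Longrightarrow> \<bar>ue t x\<bar> \<le> M1"
    and uper: "\<And>t x. 0 \<le> t \<Longrightarrow> ue t (x + 2*pi) = ue t x"
    and ode: "\<And>t. 0 \<le> t \<Longrightarrow> \<exists>D. (Xe has_vector_derivative D) (at t within {0..}) \<and>
            (\<forall>x. apply_bcontfun D x = upwind_rhs \<epsilon> (Xe t) (ue t) x)"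
begin

lemma Xcont: "continuous_on {0..} Xe"
  unfolding continuous_on_eq_continuous_within
  using ode has_vector_derivative_continuous by fastforce

lemma step:
  assumes t: "0 \<le> t" and e: "e > 0"
  shows "\<exists>d>0. \<forall>h. 0 < h \<and> h < d \<longrightarrow>
     (\<forall>x. \<bar>Xe (t+h) x - Xe t x - h * upwind_rhs \<epsilon> (Xe t) (ue t) x\<bar> \<le> e*h)"
proof -
  obtain D where D: "(Xe has_vector_derivative D) (at t within {0..})"
     "\<forall>x. apply_bcontfun D x = upwind_rhs \<epsilon> (Xe t) (ue t) x"
    using ode[OF t] by blast
  obtain d where d: "d > 0" "\<forall>y\<in>{0..}. norm (y - t) < d \<longrightarrow>
      norm (Xe y - Xe t - (y - t) *\<^sub>R D) \<le> e * norm (y - t)"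
    using D(1) e unfolding has_vector_derivative_def has_derivative_within_alt by blast
  show ?thesis
  proof (intro exI[of _ d] conjI allI impI)
    fix h x assume h: "0 < h \<and> h < d"
    have "norm (Xe (t+h) - Xe t - h *\<^sub>R D) \<le> e * h"
      using d(2)[rule_format, of "t+h"] h t by auto
    moreover have "\<bar>Xe (t+h) x - Xe t x - h * upwind_rhs \<epsilon> (Xe t) (ue t) x\<bar>
       \<le> norm (Xe (t+h) - Xe t - h *\<^sub>R D)"
      using norm_bounded[of "Xe (t+h) - Xe t - h *\<^sub>R D" x] D(2) by simp
    ultimately show "\<bar>Xe (t+h) x - Xe t x - h * upwind_rhs \<epsilon> (Xe t) (ue t) x\<bar> \<le> e*h" by linarith
  qed (use d in auto)
qed

end




context traj begin

lemma Xbd: "\<bar>Xe t x\<bar> \<le> norm (Xe t)"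
  using norm_bounded[of "Xe t" x] by simp

lemma periodic:
  assumes X0: "\<And>x. Xe 0 (x + 2*pi) = Xe 0 x" and t: "0 \<le> t"
  shows "Xe t (x + 2*pi) = Xe t x"
proof -
  define W where "W t x = Xe t (x + 2*pi) - Xe t x" for t x
  define f where "f t = (SUP x. \<bar>W t x\<bar>)" for t
  define L where "L = 2*M1/\<epsilon>"
  have L0: "L \<ge> 0" unfolding L_def using eps M1 by simp
  have Wb: "\<bar>W t x\<bar> \<le> 2 * norm (Xe t)" for t x
    unfolding W_def using Xbd[of t x] Xbd[of t "x+2*pi"] by linarith
  have fup: "\<bar>W t x\<bar> \<le> f t" for t x
    unfolding f_def by (rule cSUP_upper) (simp, rule bdd_aboveI2[where M="2 * norm (Xe t)"], rule Wb)
  have fle: "f t \<le> B" if "\<And>x. \<bar>W t x\<bar> \<le> B" for t B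
    unfolding f_def by (rule cSUP_least) (use that in auto)
  have f0: "f t \<ge> 0" for t using fup[of t 0] by simp
  have Wdiff: "\<bar>W s x\<bar> \<le> \<bar>W t x\<bar> + 2 * norm (Xe s - Xe t)" for s t x
    unfolding W_def using bcf_diff_le[of "Xe s" x "Xe t"] bcf_diff_le[of "Xe s" "x+2*pi" "Xe t"] by linarith
  have fdiff: "\<bar>f s - f t\<bar> \<le> 2 * norm (Xe s - Xe t)" for s t
  proof -
    have "f s \<le> f t + 2 * norm (Xe s - Xe t)"
      by (rule fle) (use Wdiff fup order_trans add_right_mono in blast)
    moreover have "f t \<le> f s + 2 * norm (Xe t - Xe s)"
      by (rule fle) (use Wdiff fup order_trans add_right_mono in blast)
    moreover have "norm (Xe t - Xe s) = norm (Xe s - Xe t)" by (rule norm_minus_commute)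
    ultimately show ?thesis by linarith
  qed
  have fcont: "continuous_on {0..} f"
    by (rule cont_norm_bound[OF Xcont, of 2]) (use fdiff in auto)
  define g where "g t = exp (- L * t) * f t" for t
  have gcont: "continuous_on {0..} g" unfolding g_def by (intro continuous_intros fcont)
  have gstep: "\<exists>d>0. \<forall>h. 0 < h \<and> h < d \<longrightarrow> g (t+h) \<le> g t + e*h" if t: "0 \<le> t" and e: "0 < e" for t e
  proof -
    obtain d where d: "d > 0" "\<forall>h. 0 < h \<and> h < d \<longrightarrow>
       (\<forall>x. \<bar>Xe (t+h) x - Xe t x - h * upwind_rhs \<epsilon> (Xe t) (ue t) x\<bar> \<le> (e/2)*h)"
      using step[OF t, of "e/2"] e by auto
    show ?thesis
    proof (intro exI[of _ "min d (\<epsilon>/M1)"] conjI allI impI)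
      fix h assume h: "0 < h \<and> h < min d (\<epsilon>/M1)"
      have hM: "h * M1 \<le> \<epsilon>" using h M1 by (simp add: field_simps)
      have "\<bar>W (t+h) x\<bar> \<le> (1 + h*L) * f t + e*h" for x
      proof -
        have lin: "upwind_rhs \<epsilon> (Xe t) (ue t) (x + 2*pi) - upwind_rhs \<epsilon> (Xe t) (ue t) x
            = upwind_rhs \<epsilon> (W t) (ue t) x"
        proof -
          have "ue t (x + 2*pi - \<epsilon>) = ue t (x - \<epsilon>)" using uper[OF t, of "x - \<epsilon>"] by (simp add: algebra_simps)
          moreover have "ue t (x + 2*pi + \<epsilon>) = ue t (x + \<epsilon>)" using uper[OF t, of "x + \<epsilon>"] by (simp add: algebra_simps)
          moreover have "ue t (x + 2*pi) = ue t x" using uper[OF t] by simp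
          moreover have "Xe t (x + 2*pi - \<epsilon>) = Xe t (x - \<epsilon> + 2*pi)" "Xe t (x + 2*pi + \<epsilon>) = Xe t (x + \<epsilon> + 2*pi)"
            by (simp_all add: algebra_simps)
          ultimately have 1: "upwind_rhs \<epsilon> (Xe t) (ue t) (x+2*pi) = upwind_rhs \<epsilon> (\<lambda>y. Xe t (y+2*pi)) (ue t) x"
            unfolding upwind_rhs_def by (simp add: algebra_simps)
          have 2: "upwind_rhs \<epsilon> (W t) (ue t) x = upwind_rhs \<epsilon> (\<lambda>y. Xe t (y+2*pi)) (ue t) x - upwind_rhs \<epsilon> (Xe t) (ue t) x"
            unfolding upwind_rhs_def W_def by (simp add: algebra_simps)
          show ?thesis unfolding 1 2 ..
        qed
        have a: "\<bar>W t x + h * upwind_rhs \<epsilon> (W t) (ue t) x\<bar> \<le> (1 + h * (2*M1/\<epsilon>)) * f t"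
          by (rule pos_step_sup[OF eps _ _ hM fup]) (use ubd[OF t] h in auto)
        have r1: "\<bar>Xe (t+h) (x+2*pi) - Xe t (x+2*pi) - h * upwind_rhs \<epsilon> (Xe t) (ue t) (x+2*pi)\<bar> \<le> (e/2)*h"
          and r2: "\<bar>Xe (t+h) x - Xe t x - h * upwind_rhs \<epsilon> (Xe t) (ue t) x\<bar> \<le> (e/2)*h"
          using d h by auto
        have "W (t+h) x = (W t x + h * upwind_rhs \<epsilon> (W t) (ue t) x)
           + (Xe (t+h) (x+2*pi) - Xe t (x+2*pi) - h * upwind_rhs \<epsilon> (Xe t) (ue t) (x+2*pi))
           - (Xe (t+h) x - Xe t x - h * upwind_rhs \<epsilon> (Xe t) (ue t) x)"
          unfolding W_def lin[symmetric] by (simp add: algebra_simps)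
        then show ?thesis using a r1 r2 unfolding L_def by linarith
      qed
      then have fh: "f (t+h) \<le> (1 + h*L) * f t + e*h" by (rule fle)
      have ex: "exp (- L * h) * (1 + h*L) \<le> 1"
      proof -
        have "1 + h*L \<le> exp (L*h)" using exp_ge_add_one_self[of "L*h"] by (simp add: mult.commute)
        then have "exp (- L * h) * (1 + h*L) \<le> exp (-L*h) * exp (L*h)" by (simp add: mult_left_mono)
        also have "\<dots> = 1" by (simp add: exp_minus_inverse flip: exp_add)
        finally show ?thesis .
      qed
      have ex2: "exp (- L * (t+h)) \<le> 1" using L0 t h by simp
      have "g (t+h) = exp (- L * (t+h)) * f (t+h)" unfolding g_def ..
      also have "\<dots> \<le> exp (- L * (t+h)) * ((1 + h*L) * f t + e*h)"
        using fh by (simp add: mult_left_mono)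
      also have "\<dots> = exp (- L * t) * (exp (- L * h) * (1 + h*L)) * f t + exp (- L * (t+h)) * (e*h)"
        by (simp add: algebra_simps mult_exp_exp)
      also have "\<dots> \<le> exp (- L * t) * 1 * f t + 1 * (e*h)"
        using ex ex2 f0[of t] e h by (intro add_mono mult_right_mono mult_left_mono) auto
      finally show "g (t+h) \<le> g t + e*h" unfolding g_def by simp
    qed (use d eps M1 in auto)
  qed
  have "g t \<le> g 0" by (rule dini_mono[OF gcont gstep]) (use t in auto)
  moreover have "f 0 \<le> 0" by (rule fle) (simp add: W_def X0)
  ultimately have "g t \<le> 0" unfolding g_def by simp
  then have "f t \<le> 0" unfolding g_def by (simp add: mult_le_0_iff)
  then have "\<bar>W t x\<bar> \<le> 0" using fup[of t x] by linarith
  then show ?thesis unfolding W_def by simp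
qed

end



context traj begin

lemma mass:
  assumes Xper: "\<And>t x. 0 \<le> t \<Longrightarrow> Xe t (x + 2*pi) = Xe t x" and t: "0 \<le> t"
  shows "integral {-pi..pi} (\<lambda>x. \<bar>Xe t x\<bar>) \<le> integral {-pi..pi} (\<lambda>x. \<bar>Xe 0 x\<bar>)"
proof -
  define m where "m t = integral {-pi..pi} (\<lambda>x. \<bar>Xe t x\<bar>)" for t
  have intc: "f integrable_on {-pi..pi}" if "continuous_on UNIV f" for f :: "real \<Rightarrow> real"
    by (rule integrable_continuous_interval) (rule continuous_on_subset[OF that], simp)
  have mdiff: "\<bar>m s - m t\<bar> \<le> 2*pi * norm (Xe s - Xe t)" for s t
  proof -
    have a: "m s \<le> m t + 2*pi * norm (Xe s - Xe t)" for s t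
    proof -
      have "m s \<le> integral {-pi..pi} (\<lambda>x. \<bar>Xe t x\<bar> + norm (Xe s - Xe t))"
        unfolding m_def
      proof (rule integral_le)
        fix x
        show "\<bar>Xe s x\<bar> \<le> \<bar>Xe t x\<bar> + norm (Xe s - Xe t)"
          using bcf_diff_le[of "Xe s" x "Xe t"] by linarith
      qed (auto intro!: intc continuous_intros)
      also have "\<dots> = m t + 2*pi * norm (Xe s - Xe t)"
        unfolding m_def by (subst integral_add) (auto intro!: intc continuous_intros)
      finally show ?thesis .
    qed
    show ?thesis using a[of s t] a[of t s] unfolding norm_minus_commute[of "Xe t" "Xe s"] by linarith
  qed
  have mcont: "continuous_on {0..} m"
    by (rule cont_norm_bound[OF Xcont, of "2*pi"]) (use mdiff in auto)
  have mstep: "\<exists>d>0. \<forall>h. 0 < h \<and> h < d \<longrightarrow> m (t+h) \<le> m t + e*h" if t: "0 \<le> t" and e: "0 < e" for t e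
  proof -
    obtain d where d: "d > 0" "\<forall>h. 0 < h \<and> h < d \<longrightarrow>
       (\<forall>x. \<bar>Xe (t+h) x - Xe t x - h * upwind_rhs \<epsilon> (Xe t) (ue t) x\<bar> \<le> (e/(2*pi))*h)"
      using step[OF t, of "e/(2*pi)"] e by auto
    show ?thesis
    proof (intro exI[of _ "min d (\<epsilon>/M1)"] conjI allI impI)
      fix h assume h: "0 < h \<and> h < min d (\<epsilon>/M1)"
      have hM: "h * M1 \<le> \<epsilon>" using h M1 by (simp add: field_simps)
      define T where "T = apply_bcontfun (Xe t)"
      define U where "U = apply_bcontfun (ue t)"
      define Q1 where "Q1 y = \<bar>T y\<bar> * max 0 (U y)" for y
      define Q2 where "Q2 y = \<bar>T y\<bar> * max 0 (- U y)" for y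
      define P where "P x = \<bar>T x\<bar> + (h/\<epsilon>) * ((Q1 (x + (-\<epsilon>)) - Q1 x) + (Q2 (x + \<epsilon>) - Q2 x))" for x
      have cT: "continuous_on UNIV T" "continuous_on UNIV U" unfolding T_def U_def by auto
      have cQ: "continuous_on UNIV Q1" "continuous_on UNIV Q2"
        unfolding Q1_def Q2_def by (intro continuous_intros cT)+
      have cQs: "continuous_on UNIV (\<lambda>x. Q1 (x + c))" "continuous_on UNIV (\<lambda>x. Q2 (x + c))" for c
        by (rule continuous_on_compose2[OF cQ(1)], intro continuous_intros, simp,
            rule continuous_on_compose2[OF cQ(2)], intro continuous_intros, simp)
      have cQm: "continuous_on UNIV (\<lambda>x. Q1 (x - \<epsilon>))" using cQs(1)[of "-\<epsilon>"] by simp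
      have pQ: "Q1 (x + 2*pi) = Q1 x" "Q2 (x + 2*pi) = Q2 x" for x
        unfolding Q1_def Q2_def T_def U_def using Xper[OF t] uper[OF t] by auto
      have pt: "\<bar>Xe (t+h) x\<bar> \<le> P x + (e/(2*pi))*h" for x
      proof -
        have "\<bar>T x + h * upwind_rhs \<epsilon> T U x\<bar> \<le> P x"
        proof -
          have "\<bar>U x\<bar> = max 0 (U x) + max 0 (- U x)" by auto
          then have "(h/\<epsilon>) * (\<bar>T (x-\<epsilon>)\<bar> * max 0 (U (x-\<epsilon>))) + (1 - h*\<bar>U x\<bar>/\<epsilon>) * \<bar>T x\<bar>
             + (h/\<epsilon>) * (\<bar>T (x+\<epsilon>)\<bar> * max 0 (- U (x+\<epsilon>))) = P x"
            unfolding P_def Q1_def Q2_def using eps by (simp add: field_simps)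
          then show ?thesis using pos_step[where U=U and Z=T and x=x, OF eps _ _ hM] ubd[OF t] h
            unfolding U_def by auto
        qed
        moreover have "\<bar>Xe (t+h) x - T x - h * upwind_rhs \<epsilon> T U x\<bar> \<le> (e/(2*pi))*h"
          using d h unfolding T_def U_def by auto
        ultimately show ?thesis by linarith
      qed
      have "m (t+h) \<le> integral {-pi..pi} (\<lambda>x. P x + (e/(2*pi))*h)"
        unfolding m_def by (rule integral_le) (use pt eps in \<open>auto intro!: intc continuous_intros cQ cT cQm cQs simp: P_def\<close>)
      also have "\<dots> = m t + e*h"
      proof -
        have s1: "integral {-pi..pi} (\<lambda>x. Q1 (x + (-\<epsilon>))) = integral {-pi..pi} Q1"
          by (rule per_shift[OF pQ(1) cQ(1)])
        have s2: "integral {-pi..pi} (\<lambda>x. Q2 (x + \<epsilon>)) = integral {-pi..pi} Q2"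
          by (rule per_shift[OF pQ(2) cQ(2)])
        have i: "(\<lambda>x. Q1 (x + (-\<epsilon>))) integrable_on {-pi..pi}" "(\<lambda>x. Q2 (x + \<epsilon>)) integrable_on {-pi..pi}"
          "Q1 integrable_on {-pi..pi}" "Q2 integrable_on {-pi..pi}" "(\<lambda>x. \<bar>T x\<bar>) integrable_on {-pi..pi}"
          by (auto intro!: intc continuous_intros cQ cT cQs cQm)
        have "integral {-pi..pi} (\<lambda>x. P x + (e/(2*pi))*h)
            = integral {-pi..pi} (\<lambda>x. \<bar>T x\<bar>) + (h/\<epsilon>) * ((integral {-pi..pi} (\<lambda>x. Q1 (x + (-\<epsilon>))) - integral {-pi..pi} Q1)
               + (integral {-pi..pi} (\<lambda>x. Q2 (x + \<epsilon>)) - integral {-pi..pi} Q2)) + e*h"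
        proof -
          let ?S = "{-pi..pi}"
          define B where "B x = (Q1 (x + (-\<epsilon>)) - Q1 x) + (Q2 (x + \<epsilon>) - Q2 x)" for x
          have iB: "B integrable_on ?S" unfolding B_def using i by (intro integrable_add integrable_diff) auto
          have iB2: "(\<lambda>x. (h/\<epsilon>) * B x) integrable_on ?S" using iB by (rule integrable_on_mult_right)
          have "integral ?S (\<lambda>x. \<bar>T x\<bar> + h / \<epsilon> * (Q1 (x + - \<epsilon>) - Q1 x + (Q2 (x + \<epsilon>) - Q2 x)) + e / (2 * pi) * h)
              = integral ?S (\<lambda>x. (\<bar>T x\<bar> + (h/\<epsilon>) * B x) + e / (2 * pi) * h)" unfolding B_def ..
          also have "\<dots> = integral ?S (\<lambda>x. \<bar>T x\<bar> + (h/\<epsilon>) * B x) + integral ?S (\<lambda>x. e / (2 * pi) * h)"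
            by (rule integral_add) (use i iB2 in \<open>auto intro: integrable_add\<close>)
          also have "integral ?S (\<lambda>x. \<bar>T x\<bar> + (h/\<epsilon>) * B x) = integral ?S (\<lambda>x. \<bar>T x\<bar>) + integral ?S (\<lambda>x. (h/\<epsilon>) * B x)"
            by (rule integral_add) (use i iB2 in auto)
          also have "integral ?S (\<lambda>x. (h/\<epsilon>) * B x) = (h/\<epsilon>) * integral ?S B"
            by (rule integral_mult_right)
          also have "integral ?S B = (integral ?S (\<lambda>x. Q1 (x + (-\<epsilon>))) - integral ?S Q1) + (integral ?S (\<lambda>x. Q2 (x + \<epsilon>)) - integral ?S Q2)"
            unfolding B_def using i by (simp add: integral_add integral_diff integrable_diff)
          also have "integral ?S (\<lambda>x. e / (2 * pi) * h) = e * h" by simp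
          finally have fin: "integral ?S (\<lambda>x. \<bar>T x\<bar> + h / \<epsilon> * (Q1 (x + - \<epsilon>) - Q1 x + (Q2 (x + \<epsilon>) - Q2 x)) + e / (2 * pi) * h) = integral ?S (\<lambda>x. \<bar>T x\<bar>) + (h/\<epsilon>) * ((integral ?S (\<lambda>x. Q1 (x + (-\<epsilon>))) - integral ?S Q1) + (integral ?S (\<lambda>x. Q2 (x + \<epsilon>)) - integral ?S Q2)) + e*h" .
          show ?thesis unfolding P_def by (rule fin)
        qed
        then show ?thesis unfolding s1 s2 m_def T_def by simp
      qed
      finally show "m (t+h) \<le> m t + e*h" .
    qed (use d eps M1 in auto)
  qed
  show ?thesis using dini_mono[OF mcont mstep, of 0 t] t unfolding m_def by auto
qed

end



lemma phi_facts:
  fixes \<phi> :: "real \<Rightarrow> real"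
  assumes sm: "smooth_real \<phi>" and sp: "has_compact_support \<phi>"
  shows "\<exists>R>0. (\<forall>s. R < \<bar>s\<bar> \<longrightarrow> \<phi> s = 0 \<and> deriv \<phi> s = 0)
     \<and> (\<forall>s. (\<phi> has_real_derivative deriv \<phi> s) (at s))
     \<and> continuous_on UNIV (deriv \<phi>) \<and> continuous_on UNIV \<phi>"
proof -
  have d0: "\<phi> differentiable (at x)" for x
  proof -
    have "((deriv ^^ 0) \<phi>) differentiable (at x)" using sm unfolding smooth_real_def by blast
    then show ?thesis by simp
  qed
  have d1: "deriv \<phi> differentiable (at x)" for x
  proof -
    have "((deriv ^^ 1) \<phi>) differentiable (at x)" using sm unfolding smooth_real_def by blast
    then show ?thesis by simp
  qed
  have der: "(\<phi> has_real_derivative deriv \<phi> s) (at s)" for s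
    using d0[of s] by (simp add: DERIV_deriv_iff_real_differentiable)
  have c1: "continuous_on UNIV (deriv \<phi>)"
    by (intro continuous_at_imp_continuous_on ballI differentiable_imp_continuous_within d1)
  have c0: "continuous_on UNIV \<phi>"
    by (intro continuous_at_imp_continuous_on ballI differentiable_imp_continuous_within d0)
  obtain R0 where R0: "\<forall>s\<in>closure {x. \<phi> x \<noteq> 0}. norm s \<le> R0"
  proof -
    have "bounded (closure {x. \<phi> x \<noteq> 0})" using sp unfolding has_compact_support_def by (rule compact_imp_bounded)
    then obtain a where "\<forall>s\<in>closure {x. \<phi> x \<noteq> 0}. norm s \<le> a" unfolding bounded_iff by blast
    then show ?thesis by (rule that)
  qed
  define R where "R = max R0 1"
  have z: "\<phi> s = 0" if "R < \<bar>s\<bar>" for s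
  proof (rule ccontr)
    assume "\<phi> s \<noteq> 0"
    then have "s \<in> {x. \<phi> x \<noteq> 0}" by simp
    then have "s \<in> closure {x. \<phi> x \<noteq> 0}" by (rule subsetD[OF closure_subset])
    then have "norm s \<le> R0" using R0 by blast
    moreover have "R0 \<le> R" unfolding R_def by simp
    ultimately show False using that by simp
  qed
  have dz: "deriv \<phi> s = 0" if s: "R < \<bar>s\<bar>" for s
  proof -
    have "((\<lambda>_. 0) has_real_derivative 0) (at s)" by simp
    then have "(\<phi> has_real_derivative 0) (at s)"
    proof (rule has_field_derivative_transform_within_open[where S="{y. R < \<bar>y\<bar>}"])
      show "open {y::real. R < \<bar>y\<bar>}" by (intro open_Collect_less continuous_intros)
      show "s \<in> {y. R < \<bar>y\<bar>}" using s by simp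
      fix y assume "y \<in> {y. R < \<bar>y\<bar>}"
      then show "0 = \<phi> y" using z by simp
    qed
    then show ?thesis by (rule DERIV_imp_deriv)
  qed
  have "R > 0" unfolding R_def by simp
  then show ?thesis using z dz der c0 c1 by blast
qed
lemma bound_zero_outside:
  fixes g :: "real \<Rightarrow> real"
  assumes "continuous_on UNIV g" "\<And>s. R < \<bar>s\<bar> \<Longrightarrow> g s = 0"
  shows "\<exists>B>0. \<forall>s. \<bar>g s\<bar> \<le> B"
proof -
  have "compact (g ` {-R..R})"
    by (rule compact_continuous_image) (use assms(1) continuous_on_subset in auto)
  then obtain B where B: "B > 0" "\<forall>y\<in>g ` {-R..R}. norm y \<le> B"
  proof -
    have "bounded (g ` {-R..R})" using \<open>compact (g ` {-R..R})\<close> by (rule compact_imp_bounded)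
    then show ?thesis using that unfolding bounded_pos by blast
  qed
  show ?thesis
  proof (intro exI[of _ B] conjI allI)
    fix s show "\<bar>g s\<bar> \<le> B"
    proof (cases "R < \<bar>s\<bar>")
      case True then show ?thesis using assms(2) B by simp
    next
      case False then have "s \<in> {-R..R}" by auto
      then show ?thesis using B by auto
    qed
  qed (use B in auto)
qed




lemma conv_bounds:
  fixes f :: "real \<Rightarrow>\<^sub>C real" and \<phi> :: "real \<Rightarrow> real"
  assumes per: "\<And>x. f (x + 2*pi) = f x"
    and I: "integral {-pi..pi} (\<lambda>x. \<bar>f x\<bar>) \<le> C"
    and \<delta>: "0 < \<delta>" "\<delta> \<le> 1"
    and R: "R > 0" "\<And>s. R < \<bar>s\<bar> \<Longrightarrow> \<phi> s = 0"
    and der: "\<And>s. (\<phi> has_real_derivative deriv \<phi> s) (at s)"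
    and cd: "continuous_on UNIV (deriv \<phi>)"
    and B: "\<And>s. \<bar>\<phi> s\<bar> \<le> B" "\<And>s. \<bar>deriv \<phi> s\<bar> \<le> B"
    and N: "N = nat (ceiling ((2*R+2)/(2*pi)))"
  shows "\<bar>conv f (mollifier \<phi> \<delta>) x\<bar> \<le> B * (real N * C) / \<delta>
       \<and> \<bar>deriv (\<lambda>y. conv f (mollifier \<phi> \<delta>) y) x\<bar> \<le> B * (real N * C) / \<delta>^2"
proof -
  define a where "a = x - R - 1"
  define b where "b = x + R + 1"
  have B0: "B \<ge> 0" using B(1)[of 0] by simp
  have cf: "continuous_on UNIV (\<lambda>z. \<bar>f z\<bar>)" by (intro continuous_intros)
  have intf: "(\<lambda>z. \<bar>f z\<bar>) integrable_on {c..d}" for c d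
    by (rule integrable_continuous_interval) (rule continuous_on_subset[OF cf], simp)
  have W: "integral {a..b} (\<lambda>z. \<bar>f z\<bar>) \<le> real N * C"
  proof -
    have "(2*R+2)/(2*pi) \<le> real N" unfolding N by linarith
    then have "2*R+2 \<le> 2*pi*real N" by (simp add: field_simps)
    then have sub: "{a..b} \<subseteq> {a..a + 2*pi*real N}" unfolding a_def b_def by auto
    have "integral {a..b} (\<lambda>z. \<bar>f z\<bar>) \<le> integral {a..a + 2*pi*real N} (\<lambda>z. \<bar>f z\<bar>)"
      by (rule integral_subset_le[OF sub intf intf]) auto
    also have "\<dots> = real N * integral {-pi..pi} (\<lambda>z. \<bar>f z\<bar>)"
      by (rule per_multi) (use per cf in auto)
    also have "\<dots> \<le> real N * C" using I by (simp add: mult_left_mono)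
    finally show ?thesis .
  qed
  define g where "g y z = f z * (\<phi> ((y - z)/\<delta>) / \<delta>)" for y z
  have Cv: "conv f (mollifier \<phi> \<delta>) y = integral {a..b} (g y)" if y: "\<bar>y - x\<bar> < 1" for y
  proof -
    have "(\<lambda>z. f z * mollifier \<phi> \<delta> (y - z)) = (\<lambda>z. if z \<in> {a..b} then g y z else 0)"
    proof
      fix z show "f z * mollifier \<phi> \<delta> (y - z) = (if z \<in> {a..b} then g y z else 0)"
      proof (cases "z \<in> {a..b}")
        case True then show ?thesis unfolding g_def mollifier_def by simp
      next
        case False
        then have "R < \<bar>y - z\<bar>" using y unfolding a_def b_def by auto
        also have "\<bar>y - z\<bar> \<le> \<bar>(y - z)/\<delta>\<bar>"
        proof -
          have "\<delta> * \<bar>y - z\<bar> \<le> 1 * \<bar>y - z\<bar>" using \<delta> by (intro mult_right_mono) auto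
          then show ?thesis using \<delta> by (simp add: abs_divide field_simps)
        qed
        finally have "\<phi> ((y-z)/\<delta>) = 0" by (rule R(2))
        then show ?thesis unfolding mollifier_def if_not_P[OF False] by simp
      qed
    qed
    then show ?thesis unfolding conv_def using integral_restrict_UNIV[of "{a..b}" "g y"] by simp
  qed
  have cphi: "continuous_on UNIV \<phi>" using der by (intro continuous_at_imp_continuous_on ballI DERIV_isCont)
  have cphi2: "continuous_on S (\<lambda>z. \<phi> (h z))" if "continuous_on S h" for S h
    using continuous_on_compose2[OF cphi that] by simp
  have cd2: "continuous_on S (\<lambda>z. deriv \<phi> (h z))" if "continuous_on S h" for S h
    using continuous_on_compose2[OF cd that] by simp
  have cg: "continuous_on UNIV (\<lambda>z. g y z)" for y
    unfolding g_def by (intro continuous_on_mult continuous_on_divide cphi2 continuous_intros) (use \<delta> in auto)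
  have intg: "g y integrable_on {a..b}" for y
    by (rule integrable_continuous_interval) (rule continuous_on_subset[OF cg], simp)
  have val: "\<bar>integral {a..b} (g x)\<bar> \<le> B * (real N * C) / \<delta>"
  proof -
    have "\<bar>integral {a..b} (g x)\<bar> \<le> integral {a..b} (\<lambda>z. \<bar>f z\<bar> * (B/\<delta>))"
    proof (rule integral_norm_bound_integral[where f="g x", simplified])
      show "(\<lambda>z. \<bar>f z\<bar> * (B/\<delta>)) integrable_on {a..b}" using intf by (rule integrable_on_mult_left)
      fix z show "\<bar>g x z\<bar> \<le> \<bar>f z\<bar> * (B/\<delta>)"
        unfolding g_def using B(1)[of "(x-z)/\<delta>"] \<delta> by (simp add: abs_mult abs_divide mult_left_mono divide_right_mono)
    qed (rule intg)
    also have "\<dots> = integral {a..b} (\<lambda>z. \<bar>f z\<bar>) * (B/\<delta>)" by (rule integral_mult_left)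
    also have "\<dots> \<le> real N * C * (B/\<delta>)" using W B0 \<delta> by (intro mult_right_mono) auto
    finally show ?thesis by (simp add: field_simps)
  qed
  define g' where "g' y z = f z * (deriv \<phi> ((y - z)/\<delta>) / \<delta> / \<delta>)" for y z
  have Gder: "((\<lambda>y. integral (cbox a b) (g y)) has_field_derivative integral (cbox a b) (g' x)) (at x within UNIV)"
  proof (rule leibniz_rule_field_derivative)
    fix y z
    show "((\<lambda>y. g y z) has_field_derivative g' y z) (at y within UNIV)"
    proof -
      have "((\<lambda>y. (y - z)/\<delta>) has_field_derivative 1/\<delta>) (at y)"
        using \<delta> by (auto intro!: derivative_eq_intros)
      from DERIV_chain2[OF der this]
      have "((\<lambda>y. \<phi> ((y - z)/\<delta>)) has_field_derivative deriv \<phi> ((y - z)/\<delta>) * (1/\<delta>)) (at y)" .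
      then have "((\<lambda>y. f z * (\<phi> ((y - z)/\<delta>) / \<delta>)) has_field_derivative f z * (deriv \<phi> ((y - z)/\<delta>) * (1/\<delta>) / \<delta>)) (at y)"
        by (intro DERIV_cmult DERIV_cdivide)
      then show ?thesis unfolding g_def g'_def by simp
    qed
  next
    fix y show "g y integrable_on cbox a b" using intg by simp
  next
    show "continuous_on (UNIV \<times> cbox a b) (\<lambda>(y, z). g' y z)"
      unfolding g'_def split_beta
      by (intro continuous_on_mult continuous_on_divide cd2 continuous_intros) (use \<delta> in auto)
  qed auto
  have Dc: "((\<lambda>y. conv f (mollifier \<phi> \<delta>) y) has_field_derivative integral {a..b} (g' x)) (at x)"
  proof (rule has_field_derivative_transform_within_open[where S="ball x 1"])
    show "((\<lambda>y. integral {a..b} (g y)) has_field_derivative integral {a..b} (g' x)) (at x)"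
      using Gder by simp
    fix y assume "y \<in> ball x 1"
    then show "integral {a..b} (g y) = conv f (mollifier \<phi> \<delta>) y" using Cv[of y] by (simp add: dist_real_def abs_minus_commute)
  qed auto
  have intg': "g' x integrable_on {a..b}"
  proof (rule integrable_continuous_interval)
    show "continuous_on {a..b} (g' x)" unfolding g'_def
      by (intro continuous_on_mult continuous_on_divide cd2 continuous_intros) (use \<delta> in auto)
  qed
  have dv: "\<bar>integral {a..b} (g' x)\<bar> \<le> B * (real N * C) / \<delta>^2"
  proof -
    have "\<bar>integral {a..b} (g' x)\<bar> \<le> integral {a..b} (\<lambda>z. \<bar>f z\<bar> * (B/\<delta>/\<delta>))"
    proof (rule integral_norm_bound_integral[where f="g' x", simplified])
      show "(\<lambda>z. \<bar>f z\<bar> * (B/\<delta>/\<delta>)) integrable_on {a..b}" using intf by (rule integrable_on_mult_left)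
      fix z show "\<bar>g' x z\<bar> \<le> \<bar>f z\<bar> * (B/\<delta>/\<delta>)"
        unfolding g'_def using B(2)[of "(x-z)/\<delta>"] \<delta> by (simp add: abs_mult abs_divide mult_left_mono divide_right_mono)
    qed (rule intg')
    also have "\<dots> = integral {a..b} (\<lambda>z. \<bar>f z\<bar>) * (B/\<delta>/\<delta>)" by (rule integral_mult_left)
    also have "\<dots> \<le> real N * C * (B/\<delta>/\<delta>)" using W B0 \<delta> by (intro mult_right_mono) auto
    finally show ?thesis by (simp add: field_simps power2_eq_square)
  qed
  have "deriv (\<lambda>y. conv f (mollifier \<phi> \<delta>) y) x = integral {a..b} (g' x)"
    using Dc by (rule DERIV_imp_deriv)
  then show ?thesis using val dv Cv[of x] by simp
qed




theorem mainTheorem2: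
  fixes u :: "real \<Rightarrow> real \<Rightarrow> (real \<Rightarrow>\<^sub>C real)"
    and v0 :: "real \<Rightarrow> (real \<Rightarrow>\<^sub>C real)"
    and X :: "real \<Rightarrow> real \<Rightarrow> (real \<Rightarrow>\<^sub>C real)"
    and \<phi> :: "real \<Rightarrow> real"
    and \<alpha> M1 :: real
  assumes u_per: "\<And>\<epsilon> x t. 0 < \<epsilon> \<Longrightarrow> \<epsilon> < 1 \<Longrightarrow> 0 \<le> t \<Longrightarrow> u \<epsilon> t (x + 2 * pi) = u \<epsilon> t x"
    and u_cont: "\<And>\<epsilon>. 0 < \<epsilon> \<Longrightarrow> \<epsilon> < 1 \<Longrightarrow> continuous_on {0..} (u \<epsilon>)"
    and M1_pos: "M1 > 0"
    and u_bound: "\<And>\<epsilon> x t. 0 < \<epsilon> \<Longrightarrow> \<epsilon> < 1 \<Longrightarrow> 0 \<le> t \<Longrightarrow> \<bar>u \<epsilon> t x\<bar> \<le> M1"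
    and v0_per: "\<And>\<epsilon> x. 0 < \<epsilon> \<Longrightarrow> \<epsilon> < 1 \<Longrightarrow> v0 \<epsilon> (x + 2 * pi) = v0 \<epsilon> x"
    and v0_L1: "\<exists>C. \<forall>\<epsilon>. 0 < \<epsilon> \<and> \<epsilon> < 1 \<longrightarrow> integral {-pi..pi} (\<lambda>x. \<bar>v0 \<epsilon> x\<bar>) \<le> C"
    and X_init: "\<And>\<epsilon>. 0 < \<epsilon> \<Longrightarrow> \<epsilon> < 1 \<Longrightarrow> X \<epsilon> 0 = v0 \<epsilon>"
    and X_ode: "\<And>\<epsilon> t. 0 < \<epsilon> \<Longrightarrow> \<epsilon> < 1 \<Longrightarrow> 0 \<le> t \<Longrightarrow>
        \<exists>D. (X \<epsilon> has_vector_derivative D) (at t within {0..}) \<and>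
            (\<forall>x. apply_bcontfun D x = upwind_rhs \<epsilon> (X \<epsilon> t) (u \<epsilon> t) x)"
    and X_C1: "\<And>\<epsilon>. 0 < \<epsilon> \<Longrightarrow> \<epsilon> < 1 \<Longrightarrow>
        continuous_on {0..} (\<lambda>t. vector_derivative (X \<epsilon>) (at t within {0..}))"
    and phi_smooth: "smooth_real \<phi>"
    and phi_supp: "has_compact_support \<phi>"
    and phi_int: "(\<phi> has_integral 1) UNIV"
    and alpha: "0 < \<alpha>" "\<alpha> \<le> 1"
  shows "\<exists>M2>0. \<forall>\<epsilon> x t. 0 < \<epsilon> \<and> \<epsilon> < 1 \<and> 0 \<le> t \<longrightarrow>
           \<bar>conv (X \<epsilon> t) (mollifier \<phi> (\<epsilon> powr \<alpha>)) x\<bar> \<le> M2 / \<epsilon> powr \<alpha> \<and>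
           \<bar>deriv (\<lambda>y. conv (X \<epsilon> t) (mollifier \<phi> (\<epsilon> powr \<alpha>)) y) x\<bar> \<le> M2 / \<epsilon> powr (2 * \<alpha>)"
proof -
  obtain C where C: "\<forall>\<epsilon>. 0 < \<epsilon> \<and> \<epsilon> < 1 \<longrightarrow> integral {-pi..pi} (\<lambda>x. \<bar>v0 \<epsilon> x\<bar>) \<le> C"
    using v0_L1 by blast
  obtain R where R: "R > 0" "\<forall>s. R < \<bar>s\<bar> \<longrightarrow> \<phi> s = 0 \<and> deriv \<phi> s = 0"
      "\<forall>s. (\<phi> has_real_derivative deriv \<phi> s) (at s)"
      "continuous_on UNIV (deriv \<phi>)" "continuous_on UNIV \<phi>"
    using phi_facts[OF phi_smooth phi_supp] by blast
  obtain B1 where B1: "B1 > 0" "\<forall>s. \<bar>\<phi> s\<bar> \<le> B1"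
    using bound_zero_outside[OF R(5), of R] R(2) by blast
  obtain B2 where B2: "B2 > 0" "\<forall>s. \<bar>deriv \<phi> s\<bar> \<le> B2"
    using bound_zero_outside[OF R(4), of R] R(2) by blast
  define B where "B = max B1 B2"
  define N where "N = nat (ceiling ((2*R+2)/(2*pi)))"
  define C' where "C' = max C 0"
  define M2 where "M2 = B * (real N * C') + 1"
  have B0: "B \<ge> 0" unfolding B_def using B1 by simp
  have C'0: "C' \<ge> 0" unfolding C'_def by simp
  have M2pos: "M2 > 0" unfolding M2_def using B0 C'0 by (simp add: add_nonneg_pos mult_nonneg_nonneg)
  show ?thesis
  proof (intro exI[of _ M2] conjI allI impI M2pos)
    fix \<epsilon> x t :: real assume et: "0 < \<epsilon> \<and> \<epsilon> < 1 \<and> 0 \<le> t"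
    then have e0: "0 < \<epsilon>" and e1: "\<epsilon> < 1" and t: "0 \<le> t" by auto
    interpret tr: traj \<epsilon> M1 "X \<epsilon>" "u \<epsilon>"
    proof
      show "0 < \<epsilon>" by (rule e0)
      show "0 < M1" by (rule M1_pos)
      show "\<bar>u \<epsilon> t x\<bar> \<le> M1" if "0 \<le> t" for t x using u_bound e0 e1 that by blast
      show "u \<epsilon> t (x + 2*pi) = u \<epsilon> t x" if "0 \<le> t" for t x using u_per e0 e1 that by blast
      show "\<exists>D. (X \<epsilon> has_vector_derivative D) (at t within {0..}) \<and>
            (\<forall>x. apply_bcontfun D x = upwind_rhs \<epsilon> (X \<epsilon> t) (u \<epsilon> t) x)" if "0 \<le> t" for t
        using X_ode e0 e1 that by blast
    qed
    have X0: "X \<epsilon> 0 (x + 2*pi) = X \<epsilon> 0 x" for x using X_init[OF e0 e1] v0_per[OF e0 e1] by simp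
    have Xper: "X \<epsilon> s (x + 2*pi) = X \<epsilon> s x" if "0 \<le> s" for s x
      by (rule tr.periodic[OF X0 that])
    have I: "integral {-pi..pi} (\<lambda>x. \<bar>X \<epsilon> t x\<bar>) \<le> C'"
    proof -
      have "integral {-pi..pi} (\<lambda>x. \<bar>X \<epsilon> t x\<bar>) \<le> integral {-pi..pi} (\<lambda>x. \<bar>X \<epsilon> 0 x\<bar>)"
        by (rule tr.mass[OF Xper t]) auto
      also have "\<dots> \<le> C" using C e0 e1 X_init[OF e0 e1] by simp
      finally show ?thesis unfolding C'_def by simp
    qed
    define \<delta> where "\<delta> = \<epsilon> powr \<alpha>"
    have d0: "0 < \<delta>" unfolding \<delta>_def using e0 by simp
    have d1: "\<delta> \<le> 1" unfolding \<delta>_def using e0 e1 alpha by (intro powr_le1) auto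
    have d2: "\<epsilon> powr (2 * \<alpha>) = \<delta>^2" unfolding \<delta>_def
      by (simp add: power2_eq_square powr_add[symmetric])
    have cb: "\<bar>conv (X \<epsilon> t) (mollifier \<phi> \<delta>) x\<bar> \<le> B * (real N * C') / \<delta>
       \<and> \<bar>deriv (\<lambda>y. conv (X \<epsilon> t) (mollifier \<phi> \<delta>) y) x\<bar> \<le> B * (real N * C') / \<delta>^2"
    proof (rule conv_bounds[OF _ I d0 d1 R(1) _ _ R(4) _ _ N_def])
      show "X \<epsilon> t (x + 2*pi) = X \<epsilon> t x" for x by (rule Xper[OF t])
      show "\<phi> s = 0" if "R < \<bar>s\<bar>" for s using R(2) that by blast
      show "(\<phi> has_real_derivative deriv \<phi> s) (at s)" for s using R(3) by blast
      show "\<bar>\<phi> s\<bar> \<le> B" for s using B1 unfolding B_def by (meson max.coboundedI1)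
      show "\<bar>deriv \<phi> s\<bar> \<le> B" for s using B2 unfolding B_def by (meson max.coboundedI2)
    qed
    have le: "B * (real N * C') \<le> M2" unfolding M2_def by simp
    show "\<bar>conv (X \<epsilon> t) (mollifier \<phi> (\<epsilon> powr \<alpha>)) x\<bar> \<le> M2 / \<epsilon> powr \<alpha>"
      using cb divide_right_mono[OF le, of \<delta>] d0 unfolding \<delta>_def by linarith
    show "\<bar>deriv (\<lambda>y. conv (X \<epsilon> t) (mollifier \<phi> (\<epsilon> powr \<alpha>)) y) x\<bar> \<le> M2 / \<epsilon> powr (2 * \<alpha>)"
      using cb divide_right_mono[OF le, of "\<delta>^2"] d0 unfolding d2 unfolding \<delta>_def by auto
  qed
qed


end
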